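(* Let $\mathbf{A}\in\mathbb{C}^{M\times N_a}$, $\mathbf{B}\in\mathbb{C}^{M\times N_b}$ have unit-$\ell_2$-norm columns with coherence parameters $\mu_a,\mu_b,\mu_m$, and $\mathbf{D}=[\mathbf{A}\ \mathbf{B}]$. Let $\mathbf{h}=[\mathbf{h}_x^T\ \mathbf{h}_e^T]^T$ where $\mathbf{h}_x\in\mathbb{C}^{N_a}$ has at most $n_x\ge1$ nonzero entries and $\mathbf{h}_e\in\mathbb{C}^{N_b}$ has at most $n_e\ge1$ nonzero entries. Then $$(1-g)\|\mathbf{h}\|_2^2\le\|\mathbf{D}\mathbf{h}\|_2^2\le(1+g)\|\mathbf{h}\|_2^2,\qquad g=\max\{\mu_a(n_x-1),\mu_b(n_e-1)\}+\sqrt{n_xn_e}\,\mu_m.$$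
   Context: Coherence parameters: $\mu_a=\max_{k\ne\ell}|\mathbf{a}_k^H\mathbf{a}_\ell|$, $\mu_b=\max_{k\ne\ell}|\mathbf{b}_k^H\mathbf{b}_\ell|$, $\mu_m=\max_{k,\ell}|\mathbf{a}_k^H\mathbf{b}_\ell|$. *)

theory Defs
  imports "HOL-Analysis.Analysis"
begin

(* Matrices with M rows are represented as functions X :: nat => nat => complex,
   X i k = entry in row i (i < M), column k. Vectors as nat => complex. *)

definition col_inner :: "nat \<Rightarrow> (nat \<Rightarrow> nat \<Rightarrow> complex) \<Rightarrow> nat \<Rightarrow> (nat \<Rightarrow> nat \<Rightarrow> complex) \<Rightarrow> nat \<Rightarrow> complex" where
  "col_inner M X k Y l = (\<Sum>i<M. cnj (X i k) * Y i l)"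

(* coherence of the columns 0..<N of X: max_{k \<noteq> l} |x_k^H x_l|; 0 by convention if N < 2 *)
definition coherence :: "nat \<Rightarrow> nat \<Rightarrow> (nat \<Rightarrow> nat \<Rightarrow> complex) \<Rightarrow> real" where
  "coherence M N X = Max (insert 0 {cmod (col_inner M X k X l) | k l. k < N \<and> l < N \<and> k \<noteq> l})"

(* mutual coherence: max_{k,l} |a_k^H b_l| (0 by convention if a matrix has no columns) *)
definition mutual_coherence :: "nat \<Rightarrow> nat \<Rightarrow> nat \<Rightarrow> (nat \<Rightarrow> nat \<Rightarrow> complex) \<Rightarrow> (nat \<Rightarrow> nat \<Rightarrow> complex) \<Rightarrow> real" where
  "mutual_coherence M Na Nb A B = Max (insert 0 {cmod (col_inner M A k B l) | k l. k < Na \<and> l < Nb})"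

definition nnz :: "nat \<Rightarrow> (nat \<Rightarrow> complex) \<Rightarrow> nat" where
  "nnz N x = card {k. k < N \<and> x k \<noteq> 0}"

definition sqnorm :: "nat \<Rightarrow> (nat \<Rightarrow> complex) \<Rightarrow> real" where
  "sqnorm N x = (\<Sum>k<N. (cmod (x k))\<^sup>2)"

definition Dmul :: "nat \<Rightarrow> nat \<Rightarrow> (nat \<Rightarrow> nat \<Rightarrow> complex) \<Rightarrow> (nat \<Rightarrow> nat \<Rightarrow> complex)
    \<Rightarrow> (nat \<Rightarrow> complex) \<Rightarrow> (nat \<Rightarrow> complex) \<Rightarrow> nat \<Rightarrow> complex" where
  "Dmul Na Nb A B hx he = (\<lambda>i. (\<Sum>k<Na. A i k * hx k) + (\<Sum>l<Nb. B i l * he l))"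

end

theory Submission imports Defs begin

lemma gram:
  "(\<Sum>i<M. cnj (\<Sum>k<N. X i k * h k) * (\<Sum>l<N'. Y i l * g l))
   = (\<Sum>k<N. \<Sum>l<N'. cnj (h k) * g l * col_inner M X k Y l)"
proof -
  have "(\<Sum>i<M. cnj (\<Sum>k<N. X i k * h k) * (\<Sum>l<N'. Y i l * g l))
      = (\<Sum>i<M. \<Sum>k<N. \<Sum>l<N'. cnj (h k) * g l * (cnj (X i k) * Y i l))"
    by (simp add: sum_distrib_left sum_distrib_right mult_ac)
  also have "\<dots> = (\<Sum>k<N. \<Sum>i<M. \<Sum>l<N'. cnj (h k) * g l * (cnj (X i k) * Y i l))"
    by (rule sum.swap)
  also have "\<dots> = (\<Sum>k<N. \<Sum>l<N'. \<Sum>i<M. cnj (h k) * g l * (cnj (X i k) * Y i l))"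
    by (simp add: sum.swap[of _ "{..<M}"])
  also have "\<dots> = (\<Sum>k<N. \<Sum>l<N'. cnj (h k) * g l * col_inner M X k Y l)"
    by (simp add: col_inner_def sum_distrib_left)
  finally show ?thesis .
qed

lemma coh_ge: assumes "k < N" "l < N" "k \<noteq> l"
  shows "cmod (col_inner M X k X l) \<le> coherence M N X"
proof -
  have fin: "finite {cmod (col_inner M X k X l) | k l. k < N \<and> l < N \<and> k \<noteq> l}"
  proof (rule finite_subset)
    show "{cmod (col_inner M X k X l) | k l. k < N \<and> l < N \<and> k \<noteq> l}
       \<subseteq> (\<lambda>(k,l). cmod (col_inner M X k X l)) ` ({..<N} \<times> {..<N})" by auto
  qed auto
  show ?thesis unfolding coherence_def
    by (rule Max_ge) (use fin assms in auto)
qed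

lemma coh_nonneg: "0 \<le> coherence M N X"
proof -
  have fin: "finite {cmod (col_inner M X k X l) | k l. k < N \<and> l < N \<and> k \<noteq> l}"
  proof (rule finite_subset)
    show "{cmod (col_inner M X k X l) | k l. k < N \<and> l < N \<and> k \<noteq> l}
       \<subseteq> (\<lambda>(k,l). cmod (col_inner M X k X l)) ` ({..<N} \<times> {..<N})" by auto
  qed auto
  show ?thesis unfolding coherence_def
    by (rule Max_ge) (use fin in auto)
qed

lemma mcoh_ge: assumes "k < Na" "l < Nb"
  shows "cmod (col_inner M A k B l) \<le> mutual_coherence M Na Nb A B"
proof -
  have fin: "finite {cmod (col_inner M A k B l) | k l. k < Na \<and> l < Nb}"
  proof (rule finite_subset)
    show "{cmod (col_inner M A k B l) | k l. k < Na \<and> l < Nb}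
       \<subseteq> (\<lambda>(k,l). cmod (col_inner M A k B l)) ` ({..<Na} \<times> {..<Nb})" by auto
  qed auto
  show ?thesis unfolding mutual_coherence_def
    by (rule Max_ge) (use fin assms in auto)
qed

lemma mcoh_nonneg: "0 \<le> mutual_coherence M Na Nb A B"
proof -
  have fin: "finite {cmod (col_inner M A k B l) | k l. k < Na \<and> l < Nb}"
  proof (rule finite_subset)
    show "{cmod (col_inner M A k B l) | k l. k < Na \<and> l < Nb}
       \<subseteq> (\<lambda>(k,l). cmod (col_inner M A k B l)) ` ({..<Na} \<times> {..<Nb})" by auto
  qed auto
  show ?thesis unfolding mutual_coherence_def
    by (rule Max_ge) (use fin in auto)
qed

lemma l1_bound: "(\<Sum>k<N. cmod (h k))\<^sup>2 \<le> real (nnz N h) * sqnorm N h"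
proof -
  let ?S = "{k. k < N \<and> h k \<noteq> 0}"
  have "(\<Sum>k<N. cmod (h k)) = (\<Sum>k\<in>?S. cmod (h k))"
    by (rule sum.mono_neutral_right) auto
  moreover have "sqnorm N h = (\<Sum>k\<in>?S. (cmod (h k))\<^sup>2)"
    unfolding sqnorm_def by (rule sum.mono_neutral_right) auto
  ultimately show ?thesis
    using sum_squared_le_sum_of_squares[of "\<lambda>k. cmod (h k)" ?S]
    by (simp add: nnz_def mult.commute)
qed

lemma cms: "cnj z * z = complex_of_real ((cmod z)\<^sup>2)"
  by (metis complex_norm_square mult.commute of_real_power)

lemma diag_block:
  assumes unit: "\<And>k. k < N \<Longrightarrow> (\<Sum>i<M. (cmod (X i k))\<^sup>2) = 1"
  shows "cmod ((\<Sum>k<N. \<Sum>l<N. cnj (h k) * h l * col_inner M X k X l) - of_real (sqnorm N h))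
     \<le> coherence M N X * ((\<Sum>k<N. cmod (h k))\<^sup>2 - sqnorm N h)"
proof -
  let ?mu = "coherence M N X"
  let ?T = "\<lambda>k l. cnj (h k) * h l * col_inner M X k X l"
  have diag: "?T k k = of_real ((cmod (h k))\<^sup>2)" if "k < N" for k
  proof -
    have "col_inner M X k X k = of_real (\<Sum>i<M. (cmod (X i k))\<^sup>2)"
      unfolding col_inner_def of_real_sum by (simp add: cms)
    also have "\<dots> = 1" using unit[OF that] by simp
    finally show ?thesis by (simp add: cms)
  qed
  have split: "(\<Sum>l<N. ?T k l) = ?T k k + (\<Sum>l\<in>{..<N}-{k}. ?T k l)" if "k < N" for k
    using that by (simp add: sum.remove)
  have eq: "(\<Sum>k<N. \<Sum>l<N. ?T k l) - of_real (sqnorm N h) = (\<Sum>k<N. \<Sum>l\<in>{..<N}-{k}. ?T k l)"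
    by (simp add: split diag sum.distrib sqnorm_def)
  have "cmod (\<Sum>k<N. \<Sum>l\<in>{..<N}-{k}. ?T k l) \<le> (\<Sum>k<N. \<Sum>l\<in>{..<N}-{k}. cmod (?T k l))"
    by (rule order_trans[OF norm_sum sum_mono]) (rule norm_sum)
  also have "\<dots> \<le> (\<Sum>k<N. \<Sum>l\<in>{..<N}-{k}. ?mu * (cmod (h k) * cmod (h l)))"
  proof (intro sum_mono)
    fix k l assume "k \<in> {..<N}" "l \<in> {..<N}-{k}"
    then have "cmod (col_inner M X k X l) \<le> ?mu" by (intro coh_ge) auto
    then show "cmod (?T k l) \<le> ?mu * (cmod (h k) * cmod (h l))"
      by (simp add: norm_mult mult_left_mono mult.commute mult.left_commute)
  qed
  also have "\<dots> = ?mu * (\<Sum>k<N. cmod (h k) * ((\<Sum>l<N. cmod (h l)) - cmod (h k)))"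
    by (simp add: sum_distrib_left sum_diff1 algebra_simps)
  also have "\<dots> = ?mu * ((\<Sum>k<N. cmod (h k))\<^sup>2 - sqnorm N h)"
    by (simp add: sqnorm_def algebra_simps power2_eq_square sum_subtractf sum_distrib_right flip: sum_distrib_left)
  finally show ?thesis using eq by simp
qed

lemma cross_block:
  "cmod (\<Sum>k<Na. \<Sum>l<Nb. cnj (hx k) * he l * col_inner M A k B l)
     \<le> mutual_coherence M Na Nb A B * ((\<Sum>k<Na. cmod (hx k)) * (\<Sum>l<Nb. cmod (he l)))"
proof -
  let ?mu = "mutual_coherence M Na Nb A B"
  have "cmod (\<Sum>k<Na. \<Sum>l<Nb. cnj (hx k) * he l * col_inner M A k B l)
     \<le> (\<Sum>k<Na. \<Sum>l<Nb. cmod (cnj (hx k) * he l * col_inner M A k B l))"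
    by (rule order_trans[OF norm_sum sum_mono]) (rule norm_sum)
  also have "\<dots> \<le> (\<Sum>k<Na. \<Sum>l<Nb. ?mu * (cmod (hx k) * cmod (he l)))"
  proof (intro sum_mono)
    fix k l assume "k \<in> {..<Na}" "l \<in> {..<Nb}"
    then have "cmod (col_inner M A k B l) \<le> ?mu" by (intro mcoh_ge) auto
    then show "cmod (cnj (hx k) * he l * col_inner M A k B l) \<le> ?mu * (cmod (hx k) * cmod (he l))"
      by (simp add: norm_mult mult_left_mono mult.commute mult.left_commute)
  qed
  also have "\<dots> = ?mu * ((\<Sum>k<Na. cmod (hx k)) * (\<Sum>l<Nb. cmod (he l)))"
    by (simp add: sum_distrib_left sum_distrib_right mult_ac)
  finally show ?thesis .
qed

theorem mainTheorem7:
  fixes M Na Nb nx ne :: nat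
    and A B :: "nat \<Rightarrow> nat \<Rightarrow> complex"
    and hx he :: "nat \<Rightarrow> complex"
  assumes unitA: "\<And>k. k < Na \<Longrightarrow> (\<Sum>i<M. (cmod (A i k))\<^sup>2) = 1"
    and unitB: "\<And>l. l < Nb \<Longrightarrow> (\<Sum>i<M. (cmod (B i l))\<^sup>2) = 1"
    and nx: "nx \<ge> 1" and ne: "ne \<ge> 1"
    and sx: "nnz Na hx \<le> nx" and se: "nnz Nb he \<le> ne"
  defines "g \<equiv> max (coherence M Na A * (real nx - 1)) (coherence M Nb B * (real ne - 1))
                 + sqrt (real nx * real ne) * mutual_coherence M Na Nb A B"
  shows "(1 - g) * (sqnorm Na hx + sqnorm Nb he) \<le> sqnorm M (Dmul Na Nb A B hx he)
       \<and> sqnorm M (Dmul Na Nb A B hx he) \<le> (1 + g) * (sqnorm Na hx + sqnorm Nb he)"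
proof -
  define u where "u i = (\<Sum>k<Na. A i k * hx k)" for i
  define v where "v i = (\<Sum>l<Nb. B i l * he l)" for i
  define X where "X = sqnorm Na hx"
  define Y where "Y = sqnorm Nb he"
  define Lx where "Lx = (\<Sum>k<Na. cmod (hx k))"
  define Ly where "Ly = (\<Sum>l<Nb. cmod (he l))"
  define QA where "QA = (\<Sum>k<Na. \<Sum>l<Na. cnj (hx k) * hx l * col_inner M A k A l)"
  define QB where "QB = (\<Sum>k<Nb. \<Sum>l<Nb. cnj (he k) * he l * col_inner M B k B l)"
  define C where "C = (\<Sum>k<Na. \<Sum>l<Nb. cnj (hx k) * he l * col_inner M A k B l)"
  define ma where "ma = coherence M Na A"
  define mb where "mb = coherence M Nb B"
  define mm where "mm = mutual_coherence M Na Nb A B"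
  have X0: "X \<ge> 0" and Y0: "Y \<ge> 0" unfolding X_def Y_def sqnorm_def by (auto intro: sum_nonneg)
  have Lx0: "Lx \<ge> 0" and Ly0: "Ly \<ge> 0" unfolding Lx_def Ly_def by (auto intro: sum_nonneg)
  have ma0: "ma \<ge> 0" unfolding ma_def by (rule coh_nonneg)
  have mb0: "mb \<ge> 0" unfolding mb_def by (rule coh_nonneg)
  have mm0: "mm \<ge> 0" unfolding mm_def by (rule mcoh_nonneg)
  have D: "Dmul Na Nb A B hx he = (\<lambda>i. u i + v i)" unfolding Dmul_def u_def v_def by simp
  have "complex_of_real (sqnorm M (Dmul Na Nb A B hx he)) = (\<Sum>i<M. cnj (u i + v i) * (u i + v i))"
    unfolding D sqnorm_def of_real_sum by (rule sum.cong[OF refl]) (simp only: cms)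
  also have "\<dots> = (\<Sum>i<M. cnj (u i) * u i) + (\<Sum>i<M. cnj (v i) * v i)
      + (\<Sum>i<M. cnj (u i) * v i) + (\<Sum>i<M. cnj (v i) * u i)"
    by (simp add: sum.distrib algebra_simps)
  also have "(\<Sum>i<M. cnj (v i) * u i) = cnj (\<Sum>i<M. cnj (u i) * v i)"
    by (simp add: mult.commute)
  also have "(\<Sum>i<M. cnj (u i) * u i) = QA" unfolding u_def QA_def by (rule gram)
  also have "(\<Sum>i<M. cnj (v i) * v i) = QB" unfolding v_def QB_def by (rule gram)
  also have "(\<Sum>i<M. cnj (u i) * v i) = C" unfolding u_def v_def C_def by (rule gram)
  finally have S: "complex_of_real (sqnorm M (Dmul Na Nb A B hx he)) = QA + QB + C + cnj C" .
  define E where "E = sqnorm M (Dmul Na Nb A B hx he) - (X + Y)"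
  have "complex_of_real E = (QA - of_real X) + (QB - of_real Y) + C + cnj C"
    unfolding E_def using S by simp
  then have "\<bar>E\<bar> = cmod ((QA - of_real X) + (QB - of_real Y) + C + cnj C)"
    by (metis norm_of_real)
  also have "\<dots> \<le> cmod (QA - of_real X) + cmod (QB - of_real Y) + cmod C + cmod (cnj C)"
    by (intro order_trans[OF norm_triangle_ineq] add_mono order_refl)
  also have "\<dots> \<le> ma * (Lx\<^sup>2 - X) + mb * (Ly\<^sup>2 - Y) + mm * (Lx * Ly) + mm * (Lx * Ly)"
  proof -
    have dA: "cmod (QA - of_real X) \<le> ma * (Lx\<^sup>2 - X)"
      unfolding QA_def ma_def Lx_def X_def by (rule diag_block, rule unitA)
    have dB: "cmod (QB - of_real Y) \<le> mb * (Ly\<^sup>2 - Y)"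
      unfolding QB_def mb_def Ly_def Y_def by (rule diag_block, rule unitB)
    have dC: "cmod C \<le> mm * (Lx * Ly)"
      unfolding C_def mm_def Lx_def Ly_def by (rule cross_block)
    have "cmod (cnj C) = cmod C" by simp
    then show ?thesis using dA dB dC by linarith
  qed
  finally have Eb: "\<bar>E\<bar> \<le> ma * (Lx\<^sup>2 - X) + mb * (Ly\<^sup>2 - Y) + 2 * mm * (Lx * Ly)" by (simp add: mult_ac)
  have LxX: "Lx\<^sup>2 \<le> real nx * X"
    using l1_bound[where N=Na and h=hx] sx X0 unfolding Lx_def X_def
    by (meson of_nat_le_iff mult_right_mono order_trans)
  have LyY: "Ly\<^sup>2 \<le> real ne * Y"
    using l1_bound[where N=Nb and h=he] se Y0 unfolding Ly_def Y_def
    by (meson of_nat_le_iff mult_right_mono order_trans)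
  have t1: "ma * (Lx\<^sup>2 - X) \<le> ma * (real nx - 1) * X"
    using mult_left_mono[OF LxX ma0] by (simp add: algebra_simps)
  have t2: "mb * (Ly\<^sup>2 - Y) \<le> mb * (real ne - 1) * Y"
    using mult_left_mono[OF LyY mb0] by (simp add: algebra_simps)
  have Lxs: "Lx \<le> sqrt (real nx) * sqrt X"
    using LxX Lx0 by (metis real_le_rsqrt real_sqrt_mult)
  have Lys: "Ly \<le> sqrt (real ne) * sqrt Y"
    using LyY Ly0 by (metis real_le_rsqrt real_sqrt_mult)
  have "2 * (Lx * Ly) \<le> 2 * ((sqrt (real nx) * sqrt X) * (sqrt (real ne) * sqrt Y))"
    using mult_mono[OF Lxs Lys] Lx0 Ly0 X0 by simp
  also have "\<dots> = sqrt (real nx * real ne) * (2 * sqrt X * sqrt Y)"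
    by (simp add: real_sqrt_mult)
  also have "\<dots> \<le> sqrt (real nx * real ne) * (X + Y)"
  proof (rule mult_left_mono)
    have "0 \<le> (sqrt X - sqrt Y)\<^sup>2" by simp
    then show "2 * sqrt X * sqrt Y \<le> X + Y"
      using X0 Y0 by (simp add: power2_eq_square algebra_simps)
  qed simp
  finally have t3: "2 * mm * (Lx * Ly) \<le> sqrt (real nx * real ne) * mm * (X + Y)"
  proof -
    assume h: "2 * (Lx * Ly) \<le> sqrt (real nx * real ne) * (X + Y)"
    have "mm * (2 * (Lx * Ly)) \<le> mm * (sqrt (real nx * real ne) * (X + Y))"
      by (rule mult_left_mono[OF h mm0])
    then show ?thesis by (simp add: mult_ac)
  qed
  have mx: "ma * (real nx - 1) * X + mb * (real ne - 1) * Y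
     \<le> max (ma * (real nx - 1)) (mb * (real ne - 1)) * (X + Y)"
  proof -
    have "ma * (real nx - 1) * X \<le> max (ma * (real nx - 1)) (mb * (real ne - 1)) * X"
      using X0 by (intro mult_right_mono) auto
    moreover have "mb * (real ne - 1) * Y \<le> max (ma * (real nx - 1)) (mb * (real ne - 1)) * Y"
      using Y0 by (intro mult_right_mono) auto
    ultimately show ?thesis by (simp add: distrib_left)
  qed
  have gX: "g * (X + Y) = max (ma * (real nx - 1)) (mb * (real ne - 1)) * (X + Y)
      + sqrt (real nx * real ne) * mm * (X + Y)"
    unfolding g_def ma_def mb_def mm_def by (simp add: algebra_simps)
  have "\<bar>E\<bar> \<le> g * (X + Y)" using Eb t1 t2 t3 mx gX by linarith
  then show ?thesis unfolding E_def X_def Y_def by (simp add: algebra_simps abs_le_iff)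
qed

end
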